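(* Let $N$ denote a positive integer and, for each positive integer $n$, let $\mathscr E_n=\operatorname{span}_{\mathbb C}\{z^n n^q\mathcal H_{\alpha}(n): z,q\in\mathbb C,\ \alpha\text{ a word}\}$ and $\mathscr H_N=\operatorname{span}_{\mathbb C}\{\mathcal H_{\alpha}(N):\alpha\text{ a word}\}$. Suppose $F_1(n),\ldots,F_m(n)\in\mathscr E_n$, i.e. \[ F_j(n)=\sum_{\ell=1}^{M_j}c_{j,\ell}\,z_{j,\ell}^{\,n}\,n^{q_{j,\ell}}\,\mathcal H_{\alpha_{j,\ell}}(n) \] with $c_{j,\ell},z_{j,\ell},q_{j,\ell}\in\mathbb C$ and words $\alpha_{j,\ell}$. Then for every $e_1,\ldots,e_m\in\mathbb Z_{\ge0}$, the finite sum \[ S(N)=\sum_{n=1}^{N}\prod_{j=1}^{m}F_j(n)^{e_j} \] belongs to $\mathscr H_N$, i.e. it is a finite $\mathbb C$-linear combination of the numbers $\mathcal H_\beta(N)$ for words $\beta$.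
   Context: A letter is a pair $(r,s)\in\mathbb C^2$ and a word is a finite sequence of letters. For a word $\alpha=((r_1,s_1),\ldots,(r_d,s_d))$ and a positive integer $N$, \[ \mathcal H_{\alpha}(N)=\sum_{N\ge n_1>\cdots>n_d\ge1}\prod_{i=1}^{d}\frac{s_i^{n_i}}{n_i^{r_i}},\qquad \mathcal H_\emptyset(N)=1. \] Powers of positive integers are defined by $n^r=\exp(r\log n)$ with the real logarithm. *)

theory Defs
  imports "HOL-Analysis.Analysis"
begin

type_synonym word = "(complex \<times> complex) list"

definition idx :: "nat \<Rightarrow> nat \<Rightarrow> nat list set" where
  "idx d N = {ns. length ns = d \<and> sorted_wrt (>) ns \<and> set ns \<subseteq> {1..N}}"

text \<open>Multiple harmonic sum H_alpha(N) = sum over N >= n_1 > ... > n_d >= 1 of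
  prod_i s_i^(n_i) / n_i^(r_i), with n^r = exp(r ln n) (complex powr of a positive real).\<close>
definition mhs :: "word \<Rightarrow> nat \<Rightarrow> complex" where
  "mhs \<alpha> N = sum (\<lambda>ns :: nat list.
      \<Prod>i<length \<alpha>. snd (\<alpha> ! i) ^ (ns ! i) / (of_nat (ns ! i) :: complex) powr (fst (\<alpha> ! i)))
    (idx (length \<alpha>) N)"

end

theory Submission
  imports Defs
begin

lemma idx_finite: "finite (idx d N)"
proof -
  have "idx d N \<subseteq> {xs. set xs \<subseteq> {1..N} \<and> length xs = d}" unfolding idx_def by auto
  then show ?thesis using finite_lists_length_eq[of "{1..N}" d] finite_subset by blast
qed

lemma idx_0: "idx 0 N = {[]}" unfolding idx_def by auto

lemma idx_Suc0: "idx (Suc d) 0 = {}" unfolding idx_def by (auto simp: length_Suc_conv)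

lemma idx_SucSuc:
  "idx (Suc d) (Suc N) = idx (Suc d) N \<union> (\<lambda>ns. Suc N # ns) ` idx d N"
proof (rule set_eqI)
  fix ns
  show "ns \<in> idx (Suc d) (Suc N) \<longleftrightarrow> ns \<in> idx (Suc d) N \<union> (\<lambda>ns. Suc N # ns) ` idx d N"
  proof (cases ns)
    case Nil then show ?thesis unfolding idx_def by auto
  next
    case (Cons x xs)
    show ?thesis
    proof
      assume a: "ns \<in> idx (Suc d) (Suc N)"
      show "ns \<in> idx (Suc d) N \<union> (\<lambda>ns. Suc N # ns) ` idx d N"
      proof (cases "x = Suc N")
        case True
        then have "xs \<in> idx d N" using a Cons unfolding idx_def by fastforce
        then show ?thesis using Cons True by blast
      next
        case False
        then have "ns \<in> idx (Suc d) N" using a Cons unfolding idx_def by fastforce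
        then show ?thesis by blast
      qed
    next
      assume "ns \<in> idx (Suc d) N \<union> (\<lambda>ns. Suc N # ns) ` idx d N"
      then show "ns \<in> idx (Suc d) (Suc N)" unfolding idx_def by fastforce
    qed
  qed
qed

lemma mhs_Nil: "mhs [] N = 1"
  unfolding mhs_def by (simp add: idx_0)

lemma mhs_Cons_0: "mhs (a # \<alpha>) 0 = 0"
  unfolding mhs_def by (simp add: idx_Suc0)

lemma mhs_Cons_Suc:
  "mhs (a # \<alpha>) (Suc N) = mhs (a # \<alpha>) N
     + snd a ^ Suc N / (of_nat (Suc N) :: complex) powr fst a * mhs \<alpha> N"
proof -
  define f where "f = (\<lambda>ns :: nat list. \<Prod>i<length (a#\<alpha>). snd ((a#\<alpha>) ! i) ^ (ns ! i)
        / (of_nat (ns ! i) :: complex) powr (fst ((a#\<alpha>) ! i)))"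
  have disj: "idx (Suc (length \<alpha>)) N \<inter> (\<lambda>ns. Suc N # ns) ` idx (length \<alpha>) N = {}"
    unfolding idx_def by auto
  have "mhs (a # \<alpha>) (Suc N) = sum f (idx (Suc (length \<alpha>)) (Suc N))"
    unfolding mhs_def f_def by simp
  also have "\<dots> = sum f (idx (Suc (length \<alpha>)) N) + sum f ((\<lambda>ns. Suc N # ns) ` idx (length \<alpha>) N)"
    unfolding idx_SucSuc by (rule sum.union_disjoint[OF idx_finite _ disj]) (simp add: idx_finite)
  also have "sum f (idx (Suc (length \<alpha>)) N) = mhs (a # \<alpha>) N"
    unfolding mhs_def f_def by simp
  also have "sum f ((\<lambda>ns. Suc N # ns) ` idx (length \<alpha>) N)
      = sum (f \<circ> (\<lambda>ns. Suc N # ns)) (idx (length \<alpha>) N)"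
    by (rule sum.reindex) (auto simp: inj_on_def)
  also have "\<dots> = snd a ^ Suc N / (of_nat (Suc N) :: complex) powr fst a * mhs \<alpha> N"
    unfolding mhs_def sum_distrib_left
    by (rule sum.cong) (simp_all only: f_def o_def length_Cons prod.lessThan_Suc_shift nth_Cons_0 nth_Cons_Suc mult.assoc times_divide_eq_left times_divide_eq_right)
  finally show ?thesis .
qed

lemma mhs_Cons_step:
  "n \<ge> 1 \<Longrightarrow> mhs (a # \<alpha>) n = mhs (a # \<alpha>) (n - 1)
     + snd a ^ n / (of_nat n :: complex) powr fst a * mhs \<alpha> (n - 1)"
  using mhs_Cons_Suc[of a \<alpha> "n - 1"] by simp

lemma mhs_Cons_sum:
  "mhs ((r, s) # \<alpha>) N = (\<Sum>n = 1..N. s ^ n / (of_nat n :: complex) powr r * mhs \<alpha> (n - 1))"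
proof (induction N)
  case 0 then show ?case by (simp add: mhs_Cons_0)
next
  case (Suc N)
  then show ?case
    by (simp add: atLeastAtMostSuc_conv mhs_Cons_Suc del: of_nat_Suc)
qed

lemma letter_mult:
  "(s1 ^ n / (of_nat n :: complex) powr r1) * (s2 ^ n / (of_nat n :: complex) powr r2)
   = (s1 * s2) ^ n / (of_nat n :: complex) powr (r1 + r2)"
  by (simp add: powr_add power_mult_distrib)

inductive_set S :: "(nat \<Rightarrow> complex) set" where
  S_mhs: "mhs \<alpha> \<in> S"
| S_add: "f \<in> S \<Longrightarrow> g \<in> S \<Longrightarrow> (\<lambda>N. f N + g N) \<in> S"
| S_smult: "f \<in> S \<Longrightarrow> (\<lambda>N. c * f N) \<in> S"

lemma S_zero: "(\<lambda>N. 0) \<in> S"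
  using S_smult[OF S_mhs, of 0 "[]"] by simp

lemma S_L1:
  assumes "h \<in> S"
  shows "(\<lambda>N. \<Sum>n = 1..N. s ^ n / (of_nat n :: complex) powr r * h (n - 1)) \<in> S"
  using assms
proof induction
  case (S_mhs \<alpha>)
  show ?case unfolding mhs_Cons_sum[symmetric] by (rule S.S_mhs)
next
  case (S_add f g)
  then show ?case using S.S_add[OF S_add.IH] by (simp add: distrib_left sum.distrib)
next
  case (S_smult f c)
  then show ?case using S.S_smult[OF S_smult.IH, of c] by (simp add: sum_distrib_left ac_simps)
qed

lemma S_L2:
  assumes "h \<in> S"
  shows "(\<lambda>N. \<Sum>n = 1..N. s ^ n / (of_nat n :: complex) powr r * h n) \<in> S"
  using assms
proof induction
  case (S_mhs \<gamma>)
  show ?case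
  proof (cases \<gamma>)
    case Nil
    then show ?thesis using S_L1[OF S.S_mhs[of "[]"], of s r] by (simp add: mhs_Nil)
  next
    case (Cons a \<gamma>')
    obtain ra sa where a: "a = (ra, sa)" by (cases a)
    have "(\<lambda>N. \<Sum>n = 1..N. s ^ n / (of_nat n :: complex) powr r * mhs \<gamma> n)
      = (\<lambda>N. (\<Sum>n = 1..N. s ^ n / (of_nat n :: complex) powr r * mhs \<gamma> (n - 1))
           + (\<Sum>n = 1..N. (s * sa) ^ n / (of_nat n :: complex) powr (r + ra) * mhs \<gamma>' (n - 1)))"
    proof
      fix N
      show "(\<Sum>n = 1..N. s ^ n / (of_nat n :: complex) powr r * mhs \<gamma> n)
       = (\<Sum>n = 1..N. s ^ n / (of_nat n :: complex) powr r * mhs \<gamma> (n - 1))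
           + (\<Sum>n = 1..N. (s * sa) ^ n / (of_nat n :: complex) powr (r + ra) * mhs \<gamma>' (n - 1))"
        unfolding sum.distrib[symmetric]
      proof (rule sum.cong)
        fix n assume "n \<in> {1..N}"
        then have "n \<ge> 1" by simp
        show "s ^ n / (of_nat n :: complex) powr r * mhs \<gamma> n
          = s ^ n / (of_nat n :: complex) powr r * mhs \<gamma> (n - 1)
           + (s * sa) ^ n / (of_nat n :: complex) powr (r + ra) * mhs \<gamma>' (n - 1)"
          unfolding Cons a mhs_Cons_step[OF \<open>n \<ge> 1\<close>, of "(ra, sa)" \<gamma>']
          unfolding letter_mult[symmetric] by (simp add: algebra_simps)
      qed simp
    qed
    then show ?thesis using S.S_add[OF S_L1[OF S.S_mhs[of \<gamma>]] S_L1[OF S.S_mhs[of \<gamma>']]] by simp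
  qed
next
  case (S_add f g)
  then show ?case using S.S_add[OF S_add.IH] by (simp add: distrib_left sum.distrib)
next
  case (S_smult f c)
  then show ?case using S.S_smult[OF S_smult.IH, of c] by (simp add: sum_distrib_left ac_simps)
qed

lemma mhs_prod_identity:
  "mhs ((ra, sa) # \<alpha>) N * mhs ((rb, sb) # \<beta>) N =
    (\<Sum>n = 1..N. sa ^ n / (of_nat n :: complex) powr ra * (mhs \<alpha> (n-1) * mhs ((rb, sb) # \<beta>) (n-1)))
  + (\<Sum>n = 1..N. sb ^ n / (of_nat n :: complex) powr rb * (mhs ((ra, sa) # \<alpha>) (n-1) * mhs \<beta> (n-1)))
  + (\<Sum>n = 1..N. (sa * sb) ^ n / (of_nat n :: complex) powr (ra + rb) * (mhs \<alpha> (n-1) * mhs \<beta> (n-1)))"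
proof (induction N)
  case 0 then show ?case by (simp add: mhs_Cons_0)
next
  case (Suc N)
  define A where "A = (\<lambda>n. sa ^ n / (of_nat n :: complex) powr ra)"
  define B where "B = (\<lambda>n. sb ^ n / (of_nat n :: complex) powr rb)"
  define C where "C = (\<lambda>n. (sa * sb) ^ n / (of_nat n :: complex) powr (ra + rb))"
  define X where "X = mhs ((ra, sa) # \<alpha>)"
  define X' where "X' = mhs \<alpha>"
  define Y where "Y = mhs ((rb, sb) # \<beta>)"
  define Y' where "Y' = mhs \<beta>"
  have C: "C n = A n * B n" for n unfolding A_def B_def C_def by (rule letter_mult[symmetric])
  have XS: "X (Suc N) = X N + A (Suc N) * X' N" unfolding X_def X'_def A_def using mhs_Cons_Suc[of "(ra, sa)" \<alpha> N] by simp
  have YS: "Y (Suc N) = Y N + B (Suc N) * Y' N" unfolding Y_def Y'_def B_def using mhs_Cons_Suc[of "(rb, sb)" \<beta> N] by simp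
  have s1: "(\<Sum>n = 1..Suc N. f n) = (\<Sum>n = 1..N. f n) + f (Suc N)" for f :: "nat \<Rightarrow> complex"
    by (simp add: atLeastAtMostSuc_conv)
  have IH: "X N * Y N = (\<Sum>n = 1..N. A n * (X' (n-1) * Y (n-1))) + (\<Sum>n = 1..N. B n * (X (n-1) * Y' (n-1)))
     + (\<Sum>n = 1..N. C n * (X' (n-1) * Y' (n-1)))"
    using Suc.IH unfolding A_def B_def C_def X_def X'_def Y_def Y'_def .
  have "(\<Sum>n = 1..Suc N. A n * (X' (n-1) * Y (n-1))) + (\<Sum>n = 1..Suc N. B n * (X (n-1) * Y' (n-1)))
     + (\<Sum>n = 1..Suc N. C n * (X' (n-1) * Y' (n-1)))
     = ((\<Sum>n = 1..N. A n * (X' (n-1) * Y (n-1))) + (\<Sum>n = 1..N. B n * (X (n-1) * Y' (n-1)))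
     + (\<Sum>n = 1..N. C n * (X' (n-1) * Y' (n-1))))
     + (A (Suc N) * (X' N * Y N) + B (Suc N) * (X N * Y' N) + C (Suc N) * (X' N * Y' N))"
    unfolding s1 diff_Suc_1 by (simp only: add_ac)
  also have "\<dots> = X N * Y N + (A (Suc N) * (X' N * Y N) + B (Suc N) * (X N * Y' N) + C (Suc N) * (X' N * Y' N))"
    unfolding IH ..
  also have "\<dots> = X (Suc N) * Y (Suc N)"
    unfolding XS YS C by (simp add: algebra_simps)
  finally have "X (Suc N) * Y (Suc N) = (\<Sum>n = 1..Suc N. A n * (X' (n-1) * Y (n-1))) + (\<Sum>n = 1..Suc N. B n * (X (n-1) * Y' (n-1)))
     + (\<Sum>n = 1..Suc N. C n * (X' (n-1) * Y' (n-1)))" ..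
  then show ?case unfolding A_def B_def C_def X_def X'_def Y_def Y'_def .
qed

lemma S_mhs_mult: "(\<lambda>N. mhs \<alpha> N * mhs \<beta> N) \<in> S"
proof (induction "length \<alpha> + length \<beta>" arbitrary: \<alpha> \<beta> rule: less_induct)
  case less
  show ?case
  proof (cases \<alpha>)
    case Nil then show ?thesis using S_mhs[of \<beta>] by (simp add: mhs_Nil)
  next
    case (Cons a \<alpha>')
    show ?thesis
    proof (cases \<beta>)
      case Nil then show ?thesis using S_mhs[of \<alpha>] by (simp add: mhs_Nil)
    next
      case (Cons b \<beta>')
      obtain ra sa where a: "a = (ra, sa)" by (cases a)
      obtain rb sb where b: "b = (rb, sb)" by (cases b)
      have 1: "(\<lambda>N. mhs \<alpha>' N * mhs \<beta> N) \<in> S" using less Cons \<open>\<alpha> = a # \<alpha>'\<close> by simp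
      have 2: "(\<lambda>N. mhs \<alpha> N * mhs \<beta>' N) \<in> S" using less Cons \<open>\<alpha> = a # \<alpha>'\<close> by simp
      have 3: "(\<lambda>N. mhs \<alpha>' N * mhs \<beta>' N) \<in> S" using less Cons \<open>\<alpha> = a # \<alpha>'\<close> by simp
      show ?thesis
        using S_add[OF S_add[OF S_L1[OF 1, of sa ra] S_L1[OF 2, of sb rb]] S_L1[OF 3, of "sa * sb" "ra + rb"]]
        unfolding \<open>\<alpha> = a # \<alpha>'\<close> Cons a b mhs_prod_identity by simp
    qed
  qed
qed

lemma S_mult:
  assumes "f \<in> S" "g \<in> S" shows "(\<lambda>N. f N * g N) \<in> S"
  using assms(1)
proof induction
  case (S_mhs \<alpha>)
  from assms(2) show ?case
  proof induction
    case (S_mhs \<beta>) then show ?case by (rule S_mhs_mult)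
  next
    case (S_add f g) then show ?case using S.S_add[OF S_add.IH] by (simp add: distrib_left)
  next
    case (S_smult f c) then show ?case using S.S_smult[OF S_smult.IH, of c] by (simp add: ac_simps)
  qed
next
  case (S_add f1 f2) then show ?case using S.S_add[OF S_add.IH] by (simp add: distrib_right)
next
  case (S_smult f c) then show ?case using S.S_smult[OF S_smult.IH, of c] by (simp add: ac_simps)
qed

inductive_set E :: "(nat \<Rightarrow> complex) set" where
  E_mono: "h \<in> S \<Longrightarrow> (\<lambda>n. s ^ n / (of_nat n :: complex) powr r * h n) \<in> E"
| E_add: "g1 \<in> E \<Longrightarrow> g2 \<in> E \<Longrightarrow> (\<lambda>n. g1 n + g2 n) \<in> E"
| E_agree: "g \<in> E \<Longrightarrow> (\<And>n. n \<ge> 1 \<Longrightarrow> g' n = g n) \<Longrightarrow> g' \<in> E"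

lemma E_sum: "g \<in> E \<Longrightarrow> (\<lambda>N. \<Sum>n = 1..N. g n) \<in> S"
proof (induction rule: E.induct)
  case (E_mono h s r) then show ?case by (rule S_L2)
next
  case (E_add g1 g2) then show ?case using S_add[OF E_add.IH] by (simp add: sum.distrib)
next
  case (E_agree g g')
  have "(\<lambda>N. \<Sum>n = 1..N. g' n) = (\<lambda>N. \<Sum>n = 1..N. g n)"
    using E_agree.hyps(2) by (intro ext sum.cong) auto
  then show ?case using E_agree.IH by simp
qed

lemma E_mult:
  assumes "g1 \<in> E" "g2 \<in> E" shows "(\<lambda>n. g1 n * g2 n) \<in> E"
  using assms(1)
proof induction
  case (E_mono h1 s1 r1)
  note h1 = E_mono.hyps
  from assms(2) show ?case
  proof induction
    case (E_mono h2 s2 r2)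
    have "(\<lambda>n. (s1 * s2) ^ n / (of_nat n :: complex) powr (r1 + r2) * (h1 n * h2 n)) \<in> E"
      by (rule E.E_mono[OF S_mult[OF h1 E_mono.hyps]])
    then show ?case unfolding letter_mult[symmetric] by (simp add: ac_simps)
  next
    case (E_add g1 g2) then show ?case using E.E_add[OF E_add.IH] by (simp add: distrib_left)
  next
    case (E_agree g g')
    show ?case by (rule E.E_agree[OF E_agree.IH]) (simp add: E_agree.hyps(2))
  qed
next
  case (E_add f1 f2) then show ?case using E.E_add[OF E_add.IH] by (simp add: distrib_right)
next
  case (E_agree g g')
  show ?case by (rule E.E_agree[OF E_agree.IH]) (simp add: E_agree.hyps(2))
qed

lemma E_one: "(\<lambda>n. 1) \<in> E"
  by (rule E_agree[OF E_mono[OF S_mhs[of "[]"], of 1 0]]) (simp add: mhs_Nil)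

lemma E_zero: "(\<lambda>n. 0) \<in> E"
  using E_mono[OF S_zero, of 1 0] by simp

lemma E_power: "g \<in> E \<Longrightarrow> (\<lambda>n. g n ^ k) \<in> E"
  by (induction k) (simp_all add: E_one E_mult)

lemma E_term: "(\<lambda>n. c * z ^ n * (of_nat n :: complex) powr q * mhs \<alpha> n) \<in> E"
  using E_mono[OF S_smult[OF S_mhs[of \<alpha>], of c], of z "-q"]
  by (simp add: powr_minus divide_inverse ac_simps)

lemma E_sumM: "(\<lambda>n. \<Sum>l<(K::nat). c l * z l ^ n * (of_nat n :: complex) powr (q l) * mhs (\<alpha> l) n) \<in> E"
  by (induction K) (simp_all add: E_zero E_add E_term)

lemma S_repr: "f \<in> S \<Longrightarrow> \<exists>xs :: (complex \<times> word) list. \<forall>N. f N = (\<Sum>p\<leftarrow>xs. fst p * mhs (snd p) N)"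
proof (induction rule: S.induct)
  case (S_mhs \<alpha>) then show ?case by (intro exI[of _ "[(1, \<alpha>)]"]) simp
next
  case (S_add f g)
  then obtain xs ys where "\<forall>N. f N = (\<Sum>p\<leftarrow>xs. fst p * mhs (snd p) N)"
    "\<forall>N. g N = (\<Sum>p\<leftarrow>ys. fst p * mhs (snd p) N)" by blast
  then show ?case by (intro exI[of _ "xs @ ys"]) simp
next
  case (S_smult f c)
  then obtain xs where "\<forall>N. f N = (\<Sum>p\<leftarrow>xs. fst p * mhs (snd p) N)" by blast
  then show ?case
    by (intro exI[of _ "map (\<lambda>p. (c * fst p, snd p)) xs"])
      (simp add: sum_list_const_mult[symmetric] o_def ac_simps)
qed

theorem theorem3p1:
  fixes m :: nat
    and F :: "nat \<Rightarrow> nat \<Rightarrow> complex"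
    and M :: "nat \<Rightarrow> nat"
    and c z q :: "nat \<Rightarrow> nat \<Rightarrow> complex"
    and \<alpha> :: "nat \<Rightarrow> nat \<Rightarrow> word"
    and e :: "nat \<Rightarrow> nat"
  assumes "\<And>j n. j < m \<Longrightarrow> n \<ge> 1 \<Longrightarrow>
      F j n = (\<Sum>l<M j. c j l * z j l ^ n * (of_nat n :: complex) powr (q j l) * mhs (\<alpha> j l) n)"
  shows "\<exists>K (d :: nat \<Rightarrow> complex) (\<beta> :: nat \<Rightarrow> word). \<forall>N \<ge> 1.
      (\<Sum>n = 1..N. \<Prod>j<m. F j n ^ e j) = (\<Sum>k<K. d k * mhs (\<beta> k) N)"
proof -
  have FE: "F j \<in> E" if "j < m" for j
    by (rule E_agree[OF E_sumM[where K="M j" and c="c j" and z="z j" and q="q j" and \<alpha>="\<alpha> j"]]) (simp add: assms that)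
  have "\<forall>m' \<le> m. (\<lambda>n. \<Prod>j<m'. F j n ^ e j) \<in> E"
  proof (intro allI impI)
    fix m' assume "m' \<le> m"
    then show "(\<lambda>n. \<Prod>j<m'. F j n ^ e j) \<in> E"
    proof (induction m')
      case 0 then show ?case by (simp add: E_one)
    next
      case (Suc m')
      then show ?case using E_mult[OF Suc.IH E_power[OF FE, of m' "e m'"]] by simp
    qed
  qed
  then have "(\<lambda>n. \<Prod>j<m. F j n ^ e j) \<in> E" by simp
  from S_repr[OF E_sum[OF this]] obtain xs :: "(complex \<times> word) list"
    where xs: "\<forall>N. (\<Sum>n = 1..N. \<Prod>j<m. F j n ^ e j) = (\<Sum>p\<leftarrow>xs. fst p * mhs (snd p) N)" by blast
  show ?thesis
  proof (intro exI allI impI)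
    fix N :: nat
    show "(\<Sum>n = 1..N. \<Prod>j<m. F j n ^ e j)
      = (\<Sum>k<length xs. fst (xs ! k) * mhs (snd (xs ! k)) N)"
      unfolding xs[rule_format] sum_list_sum_nth by (simp add: atLeast0LessThan)
  qed
qed

end
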